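(* For every integer $n\ge0$, $$A_{2n+1}(p,-1)=\Big(\frac{p-1}{2}\Big)^nE_{2n+1},\qquad A_{2n+2}(p,-1)=\frac{p+1}{2}\Big(\frac{p-1}{2}\Big)^nE_{2n+3}.$$
   Context: For a permutation $\pi=a_1\cdots a_n$ of $[n]$, an index $i\in[n-1]$ is a descent if $a_i>a_{i+1}$; $\mathrm{odes}(\pi)$ and $\mathrm{edes}(\pi)$ count descents at odd and even positions. $A_n(p,q)=\sum_{\pi\in\mathfrak S_n}p^{\mathrm{odes}(\pi)}q^{\mathrm{edes}(\pi)}$. $E_n$ is the Euler number, the number of alternating permutations $a_1>a_2<a_3>\cdots$ in $\mathfrak S_n$; $\sum_{n\ge0}E_nt^n/n!=\tan t+\sec t$. *)

theory Defs
  imports Main "HOL-Combinatorics.Multiset_Permutations" Complex_Main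
begin

(* A permutation a_1 ... a_n of [n] is a list xs with set xs = {1..n}, distinct;
   a_i is xs ! (i - 1). Index i in [n-1] is a descent iff a_i > a_{i+1}. *)
definition is_descent :: "nat list \<Rightarrow> nat \<Rightarrow> bool" where
  "is_descent xs i \<longleftrightarrow> 1 \<le> i \<and> i < length xs \<and> xs ! (i - 1) > xs ! i"

definition odes :: "nat list \<Rightarrow> nat" where
  "odes xs = card {i. is_descent xs i \<and> odd i}"

definition edes :: "nat list \<Rightarrow> nat" where
  "edes xs = card {i. is_descent xs i \<and> even i}"

definition A :: "nat \<Rightarrow> real \<Rightarrow> real \<Rightarrow> real" where
  "A n p q = (\<Sum>\<pi>\<in>permutations_of_set {1..n}. p ^ odes \<pi> * q ^ edes \<pi>)"

definition alternating :: "nat list \<Rightarrow> bool" where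
  "alternating xs \<longleftrightarrow> (\<forall>i. 1 \<le> i \<and> i < length xs \<longrightarrow>
      (if odd i then xs ! (i - 1) > xs ! i else xs ! (i - 1) < xs ! i))"

definition Euler_num :: "nat \<Rightarrow> nat" where
  "Euler_num n = card {\<pi>\<in>permutations_of_set {1..n}. alternating \<pi>}"

end

theory Submission
  imports Defs "HOL-Combinatorics.Multiset_Permutations"
begin


fun wt :: "(nat \<Rightarrow> bool \<Rightarrow> real) \<Rightarrow> nat \<Rightarrow> nat list \<Rightarrow> real" where
  "wt f s (x # y # xs) = f (Suc s) (y < x) * wt f (Suc s) (y # xs)"
| "wt f s xs = 1"

lemma wt_nth: "wt f s xs = (\<Prod>i\<in>{1..<length xs}. f (s+i) (xs!i < xs!(i-1)))"
proof (induction f s xs rule: wt.induct)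
  case (1 f s x y xs)
  have e: "{1..<length (x#y#xs)} = insert 1 (Suc ` {1..<length (y#xs)})"
    by (auto simp: image_iff)
  have "(\<Prod>i\<in>{1..<length (x#y#xs)}. f (s+i) ((x#y#xs)!i < (x#y#xs)!(i-1)))
      = f (Suc s) (y < x) * (\<Prod>i\<in>{1..<length (y#xs)}. f (s + Suc i) ((x#y#xs)!(Suc i) < (x#y#xs)!i))"
    unfolding e
    apply (subst prod.insert)
      apply simp
     apply force
    apply (subst prod.reindex)
     apply simp
    apply (simp only: o_def)
    apply simp
    done
  also have "(\<Prod>i\<in>{1..<length (y#xs)}. f (s + Suc i) ((x#y#xs)!(Suc i) < (x#y#xs)!i))
      = (\<Prod>i\<in>{1..<length (y#xs)}. f (Suc s + i) ((y#xs)!i < (y#xs)!(i-1)))"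
    by (rule prod.cong) (auto simp: nth_Cons')
  finally show ?case using 1 by simp
qed auto

lemma wt_snoc: "wt f s (l @ [y]) = wt f s l * (if l = [] then 1 else f (s + length l) (y < last l))"
proof (induction l arbitrary: s)
  case (Cons x l)
  then show ?case by (cases l) auto
qed simp

lemma wt_append: "wt f s (l @ y # r) = wt f s (l @ [y]) * wt f (s + length l) (y # r)"
proof (induction l arbitrary: s)
  case (Cons x l)
  then show ?case by (cases l) auto
qed simp

lemma wt_Cons: "wt f s (y # r) = (if r = [] then 1 else f (Suc s) (hd r < y)) * wt f (Suc s) r"
  by (cases r) auto

lemma wt_shift: "wt (\<lambda>j. f (j + t)) s xs = wt f (s + t) xs"
  by (induction "\<lambda>j. f (j + t)" s xs rule: wt.induct) auto

lemma wt_period: "(\<And>j. f (Suc (Suc j)) = f j) \<Longrightarrow> wt f (Suc (Suc s)) xs = wt f s xs"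
  by (induction f s xs rule: wt.induct) auto

lemma wt_compl: "distinct xs \<Longrightarrow> set xs \<subseteq> {..n} \<Longrightarrow>
   wt f s (map (\<lambda>x. Suc n - x) xs) = wt (\<lambda>j b. f j (\<not> b)) s xs"
proof (induction f s xs rule: wt.induct)
  case (1 f s x y xs)
  have "(Suc n - y < Suc n - x) = (\<not> y < x)" using 1(2,3) by auto
  then show ?case using 1 by auto
qed auto

definition Gs where "Gs f s X = (\<Sum>\<pi>\<in>permutations_of_set X. wt f s \<pi>)"
definition Gn where "Gn f s n = Gs f s {1..n}"




lemma Gs_decomp:
  assumes fin: "finite X" and ne: "X \<noteq> {}"
  shows "Gs f s X = (\<Sum>S\<in>Pow (X - {Max X}). Gs f s S
      * (if card S = 0 then 1 else f (s + card S) False)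
      * (if card S = card (X - {Max X}) then 1 else f (s + card S + 1) True)
      * Gs f (s + card S + 1) (X - {Max X} - S))"
proof -
  define m where "m = Max X"
  define X' where "X' = X - {m}"
  have mX: "m \<in> X" using fin ne by (simp add: m_def)
  have mle: "\<And>x. x \<in> X \<Longrightarrow> x \<le> m" using fin by (simp add: m_def)
  have finX': "finite X'" using fin by (simp add: X'_def)
  define T where "T = Sigma (Pow X') (\<lambda>S. permutations_of_set S \<times> permutations_of_set (X' - S))"
  define P where "P = (\<lambda>x. x \<noteq> m)"
  have step1: "Gs f s X = (\<Sum>(S,l,r)\<in>T. wt f s (l @ m # r))"
    unfolding Gs_def
  proof (rule sum.reindex_bij_witness[where i="\<lambda>(S,l,r). l @ m # r"
        and j="\<lambda>\<pi>. (set (takeWhile P \<pi>), takeWhile P \<pi>, tl (dropWhile P \<pi>))"])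
    fix \<pi> assume a: "\<pi> \<in> permutations_of_set X"
    have mp: "m \<in> set \<pi>" using a mX by (auto simp: permutations_of_set_def)
    have dw: "dropWhile P \<pi> = m # tl (dropWhile P \<pi>)"
    proof -
      have "dropWhile P \<pi> \<noteq> []" using mp by (auto simp: P_def dropWhile_eq_Nil_conv)
      moreover have "\<not> P (hd (dropWhile P \<pi>))" using calculation by (rule hd_dropWhile)
      ultimately show ?thesis by (cases "dropWhile P \<pi>") (auto simp: P_def)
    qed
    have decomp: "\<pi> = takeWhile P \<pi> @ m # tl (dropWhile P \<pi>)"
      using takeWhile_dropWhile_id[of P \<pi>] dw by simp
    then show "(\<lambda>(S,l,r). l @ m # r) (set (takeWhile P \<pi>), takeWhile P \<pi>, tl (dropWhile P \<pi>)) = \<pi>"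
      by simp
    have d: "distinct \<pi>" "set \<pi> = X" using a by (auto simp: permutations_of_set_def)
    have d2: "distinct (takeWhile P \<pi> @ m # tl (dropWhile P \<pi>))" using d decomp by simp
    have st: "set (takeWhile P \<pi>) \<union> {m} \<union> set (tl (dropWhile P \<pi>)) = X"
      using d(2) decomp by (metis Un_insert_right set_append set_simps(2) sup_bot.right_neutral insert_def Un_commute Un_left_commute)
    show "(set (takeWhile P \<pi>), takeWhile P \<pi>, tl (dropWhile P \<pi>)) \<in> T"
      unfolding T_def X'_def using d2 st by (auto simp: permutations_of_set_def)
  next
    fix b assume b: "b \<in> T"
    obtain S l r where bb: "b = (S,l,r)" by (cases b) auto
    have S: "S \<subseteq> X'" "set l = S" "distinct l" "set r = X' - S" "distinct r"
      using b bb by (auto simp: T_def permutations_of_set_def)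
    have ml: "m \<notin> set l" "m \<notin> set r" using S by (auto simp: X'_def)
    have tw: "takeWhile P (l @ m # r) = l" using ml by (subst takeWhile_append2) (auto simp: P_def)
    have dw: "dropWhile P (l @ m # r) = m # r" using ml by (subst dropWhile_append2) (auto simp: P_def)
    show "(\<lambda>\<pi>. (set (takeWhile P \<pi>), takeWhile P \<pi>, tl (dropWhile P \<pi>))) ((\<lambda>(S,l,r). l @ m # r) b) = b"
      using tw dw bb S by simp
    show "(\<lambda>(S,l,r). l @ m # r) b \<in> permutations_of_set X"
      using S ml bb mX unfolding X'_def by (auto simp: permutations_of_set_def)
  next
    fix \<pi> assume "\<pi> \<in> permutations_of_set X"
    show "(\<lambda>(S,l,r). wt f s (l @ m # r)) (set (takeWhile P \<pi>), takeWhile P \<pi>, tl (dropWhile P \<pi>)) = wt f s \<pi>"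
    proof -
      have mp: "m \<in> set \<pi>" using \<open>\<pi> \<in> _\<close> mX by (auto simp: permutations_of_set_def)
      have "dropWhile P \<pi> \<noteq> []" using mp by (auto simp: P_def dropWhile_eq_Nil_conv)
      moreover have "\<not> P (hd (dropWhile P \<pi>))" using calculation by (rule hd_dropWhile)
      ultimately have dw: "dropWhile P \<pi> = m # tl (dropWhile P \<pi>)" by (cases "dropWhile P \<pi>") (auto simp: P_def)
      have "\<pi> = takeWhile P \<pi> @ m # tl (dropWhile P \<pi>)"
        using takeWhile_dropWhile_id[of P \<pi>] dw by simp
      then show ?thesis by simp
    qed
  qed
  have finT: "\<And>S. finite (permutations_of_set S \<times> permutations_of_set (X' - S))" by simp
  have step2: "(\<Sum>(S,l,r)\<in>T. wt f s (l @ m # r)) =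
      (\<Sum>S\<in>Pow X'. \<Sum>l\<in>permutations_of_set S. \<Sum>r\<in>permutations_of_set (X' - S). wt f s (l @ m # r))"
  proof -
    have "(\<Sum>(S,l,r)\<in>T. wt f s (l @ m # r)) = (\<Sum>S\<in>Pow X'. \<Sum>y\<in>permutations_of_set S \<times> permutations_of_set (X' - S). (\<lambda>(l,r). wt f s (l @ m # r)) y)"
      unfolding T_def using finX' by (subst sum.Sigma) (auto simp: split_def)
    also have "\<dots> = (\<Sum>S\<in>Pow X'. \<Sum>l\<in>permutations_of_set S. \<Sum>r\<in>permutations_of_set (X' - S). wt f s (l @ m # r))"
      by (simp add: sum.cartesian_product)
    finally show ?thesis .
  qed
  have step3: "\<And>S l r. S \<in> Pow X' \<Longrightarrow> l \<in> permutations_of_set S \<Longrightarrow> r \<in> permutations_of_set (X' - S) \<Longrightarrow>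
      wt f s (l @ m # r) = wt f s l * (if card S = 0 then 1 else f (s + card S) False)
      * (if card S = card X' then 1 else f (s + card S + 1) True) * wt f (s + card S + 1) r"
  proof -
    fix S l r assume S: "S \<in> Pow X'" and l: "l \<in> permutations_of_set S" and r: "r \<in> permutations_of_set (X' - S)"
    have fS: "finite S" using S finX' finite_subset by auto
    have len: "length l = card S" using l by (rule length_finite_permutations_of_set)
    have sl: "set l = S" and sr: "set r = X' - S" using l r by (auto simp: permutations_of_set_def)
    have l0: "(l = []) = (card S = 0)" using sl fS by auto
    have r0: "(r = []) = (card S = card X')"
    proof -
      have "(r = []) = (X' - S = {})" by (simp only: set_empty[symmetric] sr)
      also have "\<dots> = (card (X' - S) = 0)" using finX' by auto
      also have "card (X' - S) = card X' - card S" using S fS by (simp add: card_Diff_subset)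
      also have "(card X' - card S = 0) = (card S = card X')" using card_mono[OF finX', of S] S by auto
      finally show ?thesis .
    qed
    have lastl: "l \<noteq> [] \<Longrightarrow> \<not> m < last l"
    proof -
      assume "l \<noteq> []"
      then have "last l \<in> set l" by (rule last_in_set)
      then have "last l \<in> X" using sl S by (auto simp: X'_def)
      then have "last l \<le> m" by (rule mle)
      then show ?thesis by simp
    qed
    have hdr: "r \<noteq> [] \<Longrightarrow> hd r < m"
    proof -
      assume "r \<noteq> []"
      then have "hd r \<in> set r" by (rule hd_in_set)
      then have "hd r \<in> X'" using sr by simp
      then have "hd r \<in> X" "hd r \<noteq> m" by (auto simp: X'_def)
      then show ?thesis using mle[of "hd r"] by simp
    qed
    show "wt f s (l @ m # r) = wt f s l * (if card S = 0 then 1 else f (s + card S) False)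
      * (if card S = card X' then 1 else f (s + card S + 1) True) * wt f (s + card S + 1) r"
      apply (subst wt_append, subst wt_snoc, subst wt_Cons)
      using lastl hdr l0 r0 len by (simp add: add.commute add.left_commute)
  qed
  have step4: "\<And>S. S \<in> Pow X' \<Longrightarrow>
      (\<Sum>l\<in>permutations_of_set S. \<Sum>r\<in>permutations_of_set (X' - S). wt f s (l @ m # r))
      = Gs f s S * (if card S = 0 then 1 else f (s + card S) False)
      * (if card S = card X' then 1 else f (s + card S + 1) True) * Gs f (s + card S + 1) (X' - S)"
  proof -
    fix S assume S: "S \<in> Pow X'"
    have "(\<Sum>l\<in>permutations_of_set S. \<Sum>r\<in>permutations_of_set (X' - S). wt f s (l @ m # r))
      = (\<Sum>l\<in>permutations_of_set S. \<Sum>r\<in>permutations_of_set (X' - S). wt f s l * ((if card S = 0 then 1 else f (s + card S) False)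
      * (if card S = card X' then 1 else f (s + card S + 1) True)) * wt f (s + card S + 1) r)"
      using step3[OF S] by (intro sum.cong refl) (simp add: mult.assoc)
    also have "\<dots> = (\<Sum>l\<in>permutations_of_set S. wt f s l * ((if card S = 0 then 1 else f (s + card S) False)
      * (if card S = card X' then 1 else f (s + card S + 1) True)) * (\<Sum>r\<in>permutations_of_set (X' - S). wt f (s + card S + 1) r))"
      by (simp only: sum_distrib_left)
    also have "\<dots> = Gs f s S * ((if card S = 0 then 1 else f (s + card S) False)
      * (if card S = card X' then 1 else f (s + card S + 1) True)) * Gs f (s + card S + 1) (X' - S)"
      unfolding Gs_def by (simp only: sum_distrib_right)
    finally show "?thesis S" by (simp add: mult.assoc)
  qed
  show ?thesis
    unfolding step1 step2 m_def[symmetric] X'_def[symmetric]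
    by (rule sum.cong[OF refl]) (rule step4)
qed




lemma sum_Pow_card:
  assumes "finite B"
  shows "(\<Sum>S\<in>Pow B. (\<phi> (card S) :: real)) = (\<Sum>k\<le>card B. of_nat (card B choose k) * \<phi> k)"
proof -
  have "(\<Sum>S\<in>Pow B. \<phi> (card S)) = (\<Sum>k\<le>card B. \<Sum>S\<in>{S. S \<in> Pow B \<and> card S = k}. \<phi> (card S))"
    using assms by (intro sum.group[symmetric]) (auto intro: card_mono)
  also have "\<dots> = (\<Sum>k\<le>card B. of_nat (card B choose k) * \<phi> k)"
  proof (rule sum.cong[OF refl])
    fix k
    have "(\<Sum>S\<in>{S. S \<in> Pow B \<and> card S = k}. \<phi> (card S)) = (\<Sum>S\<in>{S. S \<subseteq> B \<and> card S = k}. \<phi> k)"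
      by (rule sum.cong) auto
    also have "\<dots> = of_nat (card B choose k) * \<phi> k"
      using n_subsets[OF assms, of k] by simp
    finally show "(\<Sum>S\<in>{S. S \<in> Pow B \<and> card S = k}. \<phi> (card S)) = of_nat (card B choose k) * \<phi> k" .
  qed
  finally show ?thesis .
qed

definition Rt where "Rt f s n k = Gn f s k * (if k = 0 then 1 else f (s + k) False)
      * (if k = n then 1 else f (s + k + 1) True) * Gn f (s + k + 1) (n - k)"

lemma Gs_rec_aux:
  assumes fin: "finite X" and ne: "X \<noteq> {}"
    and IH: "\<And>Y s. finite Y \<Longrightarrow> card Y < card X \<Longrightarrow> Gs f s Y = Gn f s (card Y)"
  shows "Gs f s X = (\<Sum>k\<le>card X - 1. of_nat (card X - 1 choose k) * Rt f s (card X - 1) k)"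
proof -
  define X' where "X' = X - {Max X}"
  have fX': "finite X'" using fin by (simp add: X'_def)
  have cX': "card X' = card X - 1" using fin ne by (simp add: X'_def)
  have cX: "card X' < card X" using fin ne by (simp add: X'_def card_gt_0_iff)
  have "Gs f s X = (\<Sum>S\<in>Pow X'. Gs f s S
      * (if card S = 0 then 1 else f (s + card S) False)
      * (if card S = card X' then 1 else f (s + card S + 1) True)
      * Gs f (s + card S + 1) (X' - S))"
    unfolding X'_def by (rule Gs_decomp[OF fin ne])
  also have "\<dots> = (\<Sum>S\<in>Pow X'. Rt f s (card X') (card S))"
  proof (rule sum.cong[OF refl])
    fix S assume S: "S \<in> Pow X'"
    have fS: "finite S" using S fX' finite_subset by auto
    have c1: "card S < card X" using card_mono[OF fX', of S] S cX by auto
    have c2: "card (X' - S) < card X" using card_mono[OF fX', of "X' - S"] cX by auto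
    have c3: "card (X' - S) = card X' - card S" using S fS by (simp add: card_Diff_subset)
    show "Gs f s S * (if card S = 0 then 1 else f (s + card S) False)
      * (if card S = card X' then 1 else f (s + card S + 1) True)
      * Gs f (s + card S + 1) (X' - S) = Rt f s (card X') (card S)"
      unfolding Rt_def using IH[OF fS c1] IH[OF _ c2] fX' c3 by simp
  qed
  also have "\<dots> = (\<Sum>k\<le>card X'. of_nat (card X' choose k) * Rt f s (card X') k)"
    by (rule sum_Pow_card[OF fX'])
  finally show ?thesis unfolding cX' .
qed

lemma Gs_card: "finite X \<Longrightarrow> Gs f s X = Gn f s (card X)"
proof (induction "card X" arbitrary: X s rule: less_induct)
  case less
  have IH: "\<And>Y s. finite Y \<Longrightarrow> card Y < card X \<Longrightarrow> Gs f s Y = Gn f s (card Y)"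
    using less.hyps by blast
  show ?case
  proof (cases "X = {}")
    case True
    then show ?thesis by (simp add: Gn_def)
  next
    case False
    have ne2: "{1..card X} \<noteq> {}" using False less.prems by (simp add: card_gt_0_iff Suc_le_eq)
    have cc: "card {1..card X} = card X" by simp
    have "Gs f s X = (\<Sum>k\<le>card X - 1. of_nat (card X - 1 choose k) * Rt f s (card X - 1) k)"
      by (rule Gs_rec_aux[OF less.prems False IH])
    also have "\<dots> = Gs f s {1..card X}"
      using Gs_rec_aux[of "{1..card X}" f s, OF _ ne2] IH unfolding cc by simp
    finally show ?thesis by (simp add: Gn_def)
  qed
qed

lemma Gn_rec: "Gn f s (Suc n) = (\<Sum>k\<le>n. of_nat (n choose k) * Rt f s n k)"
proof -
  have "Gn f s (Suc n) = Gs f s {1..Suc n}" by (simp add: Gn_def)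
  also have "\<dots> = (\<Sum>k\<le>card {1..Suc n} - 1. of_nat (card {1..Suc n} - 1 choose k) * Rt f s (card {1..Suc n} - 1) k)"
    by (rule Gs_rec_aux) (auto simp: Gs_card)
  finally show ?thesis by simp
qed

lemma Gn_0: "Gn f s 0 = 1" by (simp add: Gn_def Gs_def)

lemma Gn_shift: "Gn (\<lambda>j. f (j + t)) s n = Gn f (s + t) n"
  by (simp add: Gn_def Gs_def wt_shift)

lemma Gn_period: assumes "\<And>j. f (Suc (Suc j)) = f j" shows "Gn f s n = Gn f (s mod 2) n"
proof (induction s rule: less_induct)
  case (less s)
  show ?case
  proof (cases "s < 2")
    case True then show ?thesis by simp
  next
    case False
    then obtain t where t: "s = Suc (Suc t)" by (cases s; cases "s - 1") auto
    have "Gn f s n = Gn f t n" unfolding t Gn_def Gs_def using wt_period[of f, OF assms] by simp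
    also have "\<dots> = Gn f (t mod 2) n" by (rule less.IH) (simp add: t)
    finally show ?thesis using t by simp
  qed
qed

lemma compl_perm:
  assumes a: "a \<in> permutations_of_set {1..n}"
  shows "map (\<lambda>x. Suc n - x) a \<in> permutations_of_set {1..n}"
    "map (\<lambda>x. Suc n - x) (map (\<lambda>x. Suc n - x) a) = a"
proof -
  have sa: "set a = {1..n}" "distinct a" using a by (auto simp: permutations_of_set_def)
  show "map (\<lambda>x. Suc n - x) (map (\<lambda>x. Suc n - x) a) = a"
    by (simp, rule map_idI) (use sa in auto)
  have "inj_on (\<lambda>x. Suc n - x) {1..n}" by (auto simp: inj_on_def)
  moreover have "(\<lambda>x. Suc n - x) ` {1..n} = {1..n}"
  proof
    show "(\<lambda>x. Suc n - x) ` {1..n} \<subseteq> {1..n}" by auto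
    show "{1..n} \<subseteq> (\<lambda>x. Suc n - x) ` {1..n}"
    proof
      fix x assume "x \<in> {1..n}"
      then have "x = Suc n - (Suc n - x)" "Suc n - x \<in> {1..n}" by auto
      then show "x \<in> (\<lambda>x. Suc n - x) ` {1..n}" by (rule image_eqI)
    qed
  qed
  ultimately show "map (\<lambda>x. Suc n - x) a \<in> permutations_of_set {1..n}"
    using sa by (auto simp: permutations_of_set_def distinct_map)
qed

lemma Gn_compl: "Gn f s n = Gn (\<lambda>j b. f j (\<not> b)) s n"
  unfolding Gn_def Gs_def
proof (rule sum.reindex_bij_witness[where i="map (\<lambda>x. Suc n - x)" and j="map (\<lambda>x. Suc n - x)"])
  fix a assume a: "a \<in> permutations_of_set {1..n}"
  then have sa: "set a = {1..n}" "distinct a" by (auto simp: permutations_of_set_def)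
  show "wt (\<lambda>j b. f j (\<not> b)) s (map (\<lambda>x. Suc n - x) a) = wt f s a"
  proof -
    have "wt (\<lambda>j b. f j (\<not> b)) s (map (\<lambda>x. Suc n - x) a) = wt (\<lambda>j b. f j (\<not> \<not> b)) s a"
      by (rule wt_compl) (use sa in auto)
    then show ?thesis by simp
  qed
qed (erule compl_perm)+




definition fA :: "real \<Rightarrow> nat \<Rightarrow> bool \<Rightarrow> real" where
  "fA p j b = (if b then (if odd j then p else -1) else 1)"
definition fE :: "nat \<Rightarrow> bool \<Rightarrow> real" where
  "fE j b = (if b = odd j then 1 else 0)"

lemma wt_fA: "wt (fA p) 0 xs = p ^ odes xs * (-1) ^ edes xs"
proof -
  define D where "D = {i. is_descent xs i}"
  have D: "D = {i\<in>{1..<length xs}. xs!i < xs!(i-1)}"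
    unfolding D_def is_descent_def by auto
  have "wt (fA p) 0 xs = (\<Prod>i\<in>{1..<length xs}. if xs!i < xs!(i-1) then (if odd i then p else -1) else 1)"
    by (simp add: wt_nth fA_def)
  also have "\<dots> = (\<Prod>i\<in>D. if odd i then p else -1)"
    unfolding D by (rule prod.inter_filter[symmetric]) simp
  also have "\<dots> = (\<Prod>i\<in>D \<inter> {i. odd i}. p) * (\<Prod>i\<in>D \<inter> - {i. odd i}. -1)"
    by (rule prod.If_cases) (simp add: D)
  also have "\<dots> = p ^ card (D \<inter> {i. odd i}) * (-1) ^ card (D \<inter> - {i. odd i})" by simp
  also have "D \<inter> {i. odd i} = {i. is_descent xs i \<and> odd i}" by (auto simp: D_def)
  also have "D \<inter> - {i. odd i} = {i. is_descent xs i \<and> even i}" by (auto simp: D_def)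
  finally show ?thesis by (simp add: odes_def edes_def)
qed

lemma A_Gn: "A n p (-1) = Gn (fA p) 0 n"
  unfolding A_def Gn_def Gs_def by (simp add: wt_fA)

lemma wt_fE: assumes "distinct xs" shows "wt fE 0 xs = (if alternating xs then 1 else 0)"
proof -
  have ne: "\<And>i. 1 \<le> i \<Longrightarrow> i < length xs \<Longrightarrow> xs!(i-1) \<noteq> xs!i"
    using assms by (simp add: nth_eq_iff_index_eq)
  have pt: "\<And>i. 1 \<le> i \<Longrightarrow> i < length xs \<Longrightarrow>
      (if odd i then xs!(i-1) > xs!i else xs!(i-1) < xs!i) = ((xs!i < xs!(i-1)) = odd i)"
  proof -
    fix i assume i: "1 \<le> i" "i < length xs"
    have "xs!(i-1) \<noteq> xs!i" using ne[OF i] .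
    then show "(if odd i then xs!(i-1) > xs!i else xs!(i-1) < xs!i) = ((xs!i < xs!(i-1)) = odd i)"
      by (cases "odd i") auto
  qed
  have alt: "alternating xs = (\<forall>i\<in>{1..<length xs}. (xs!i < xs!(i-1)) = odd i)"
    unfolding alternating_def
  proof (rule iffI)
    assume H: "\<forall>i. 1 \<le> i \<and> i < length xs \<longrightarrow> (if odd i then xs ! (i - 1) > xs ! i else xs ! (i - 1) < xs ! i)"
    show "\<forall>i\<in>{1..<length xs}. (xs!i < xs!(i-1)) = odd i"
    proof
      fix i assume "i \<in> {1..<length xs}"
      then show "(xs!i < xs!(i-1)) = odd i" using pt[of i] H by auto
    qed
  next
    assume H: "\<forall>i\<in>{1..<length xs}. (xs!i < xs!(i-1)) = odd i"
    show "\<forall>i. 1 \<le> i \<and> i < length xs \<longrightarrow> (if odd i then xs ! (i - 1) > xs ! i else xs ! (i - 1) < xs ! i)"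
    proof (intro allI impI)
      fix i assume "1 \<le> i \<and> i < length xs"
      then show "if odd i then xs ! (i - 1) > xs ! i else xs ! (i - 1) < xs ! i" using pt[of i] H by auto
    qed
  qed
  have w: "wt fE 0 xs = (\<Prod>i\<in>{1..<length xs}. if (xs!i < xs!(i-1)) = odd i then 1 else 0)"
    by (simp add: wt_nth fE_def)
  show ?thesis
  proof (cases "alternating xs")
    case True
    then show ?thesis unfolding w using alt by simp
  next
    case False
    then obtain i where i: "i \<in> {1..<length xs}" "(xs!i < xs!(i-1)) \<noteq> odd i" using alt by blast
    have "\<exists>a\<in>{1..<length xs}. (if (xs!a < xs!(a-1)) = odd a then 1 else (0::real)) = 0"
      using i by (intro bexI[of _ i]) simp_all
    then have "(\<Prod>i\<in>{1..<length xs}. if (xs!i < xs!(i-1)) = odd i then 1 else (0::real)) = 0"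
      by (rule prod_zero[rotated]) simp
    then show ?thesis unfolding w using False by simp
  qed
qed

lemma E_Gn: "real (Euler_num n) = Gn fE 0 n"
proof -
  have "real (Euler_num n) = (\<Sum>\<pi>\<in>permutations_of_set {1..n}. if alternating \<pi> then 1 else 0)"
  proof -
    have "(\<Sum>\<pi>\<in>permutations_of_set {1..n}. if alternating \<pi> then 1 else 0)
        = (\<Sum>\<pi>\<in>{\<pi>\<in>permutations_of_set {1..n}. alternating \<pi>}. (1::real))"
      by (rule sum.inter_filter[symmetric]) simp
    then show ?thesis unfolding Euler_num_def by simp
  qed
  also have "\<dots> = Gn fE 0 n" unfolding Gn_def Gs_def
    by (rule sum.cong) (auto simp: wt_fE permutations_of_set_def)
  finally show ?thesis .
qed

lemma GE: "Gn fE s n = real (Euler_num n)"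
proof -
  have per: "\<And>j. fE (Suc (Suc j)) = fE j" by (auto simp: fE_def fun_eq_iff)
  have "Gn fE s n = Gn fE (s mod 2) n" by (rule Gn_period[of fE, OF per])
  moreover have "Gn fE 1 n = Gn fE 0 n"
  proof -
    have "Gn fE 1 n = Gn (\<lambda>j. fE (j + 1)) 0 n" using Gn_shift[of fE 1 0 n] by simp
    also have "(\<lambda>j. fE (j + 1)) = (\<lambda>j b. fE j (\<not> b))" by (auto simp: fE_def fun_eq_iff)
    also have "Gn \<dots> 0 n = Gn fE 0 n" by (rule Gn_compl[symmetric])
    finally show ?thesis .
  qed
  ultimately show ?thesis using E_Gn[of n] by (cases "even s") (auto simp: mod2_eq_if)
qed

abbreviation EE where "EE n \<equiv> real (Euler_num n)"

lemma E0: "EE 0 = 1" using GE[of 0 0] by (simp add: Gn_0)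
lemma E1: "EE 1 = 1" using GE[of 0 1] Gn_rec[of fE 0 0] by (simp add: Rt_def GE Gn_0)

lemma R_odd: assumes "N \<ge> 1"
  shows "EE (Suc N) = (\<Sum>k\<le>N. if odd k then of_nat (N choose k) * EE k * EE (N - k) else 0)"
proof -
  have "EE (Suc N) = Gn fE 1 (Suc N)" by (simp add: GE)
  also have "\<dots> = (\<Sum>k\<le>N. of_nat (N choose k) * Rt fE 1 N k)" by (rule Gn_rec)
  also have "\<dots> = (\<Sum>k\<le>N. if odd k then of_nat (N choose k) * EE k * EE (N - k) else 0)"
  proof (rule sum.cong[OF refl])
    fix k assume "k \<in> {..N}"
    then show "of_nat (N choose k) * Rt fE 1 N k = (if odd k then of_nat (N choose k) * EE k * EE (N - k) else 0)"
      using assms by (auto simp: Rt_def GE fE_def)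
  qed
  finally show ?thesis .
qed




definition gc :: "(nat \<Rightarrow> real) \<Rightarrow> real \<Rightarrow> nat \<Rightarrow> real" where
  "gc E p n = (if n = 0 then 1 else if odd n then ((p-1)/2)^((n-1) div 2) * E n
     else (p+1)/2 * ((p-1)/2)^((n-2) div 2) * E (n+1))"
definition hc :: "(nat \<Rightarrow> real) \<Rightarrow> real \<Rightarrow> nat \<Rightarrow> real" where
  "hc E p n = (if n = 0 then 1 else if odd n then ((p-1)/2)^((n-1) div 2) * E n else 0)"

lemma odd_ne0 [simp]: "odd (n::nat) \<Longrightarrow> n \<noteq> 0" by (cases n) auto
lemma odd_gt0 [simp]: "odd (n::nat) \<Longrightarrow> 0 < n" by (cases n) auto

lemma X1: "odd (k::nat) \<Longrightarrow> even N \<Longrightarrow> k < N \<Longrightarrow> (k-1) div 2 + (N-k-1) div 2 = N div 2 - 1"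
proof (elim oddE evenE)
  fix a b assume "k = 2*a+1" "N = 2*b" "k < N"
  moreover have "2*b - (2*a+1) - 1 = 2*(b-a-1)" by simp
  ultimately show ?thesis by simp
qed
lemma X2: "odd (N::nat) \<Longrightarrow> even k \<Longrightarrow> 2 \<le> k \<Longrightarrow> k < N \<Longrightarrow> (k-2) div 2 + (N-k-1) div 2 = (N-1) div 2 - 1"
proof (elim oddE evenE)
  fix a b assume "k = 2*a" "N = 2*b+1" "k < N" "2 \<le> k"
  moreover have "2*b+1 - 2*a - 1 = 2*(b-a)" by simp
  moreover have "2*a - 2 = 2*(a-1)" by simp
  ultimately show ?thesis by simp
qed
lemma X3: "odd (N::nat) \<Longrightarrow> odd k \<Longrightarrow> k < N \<Longrightarrow> (k-1) div 2 + (N-k-2) div 2 = (N-1) div 2 - 1"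
proof (elim oddE)
  fix a b assume "k = 2*a+1" "N = 2*b+1" "k < N"
  moreover have "2*b+1 - (2*a+1) - 2 = 2*(b-a-1)" by simp
  ultimately show ?thesis by simp
qed

lemma sum_rev_atMost: "(\<Sum>k\<le>N. g k) = (\<Sum>k\<le>N. g (N - k :: nat))"
  by (rule sum.reindex_bij_witness[where i="\<lambda>k. N - k" and j="\<lambda>k. N - k"]) auto

lemma I2:
  assumes E1: "E 1 = 1"
    and Rodd: "\<And>N. N \<ge> 1 \<Longrightarrow> E (Suc N) = (\<Sum>k\<le>N. if odd k then of_nat (N choose k) * E k * E (N - k) else 0)"
  shows "(\<Sum>k\<le>N. of_nat (N choose k) * hc E p k * (if k = N then 1 else if odd k then p else -1)
      * (if even k then gc E p (N - k) else hc E p (N - k))) = hc E p (Suc N)"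
proof -
  define c where "c = (p-1)/2"
  define d where "d = (p+1)/2"
  let ?t = "\<lambda>k. of_nat (N choose k) * hc E p k * (if k = N then 1 else if odd k then p else -1)
      * (if even k then gc E p (N - k) else hc E p (N - k))"
  have cs: "N = 0 \<or> odd N \<or> (even N \<and> N \<ge> 2)" by presburger
  consider "N = 0" | "odd N" | "even N" "N \<ge> 2" using cs by blast
  then show ?thesis
  proof cases
    case 1
    have "E (Suc 0) = 1" using E1 by simp
    then show ?thesis using 1 by (simp add: gc_def hc_def)
  next
    case 2
    have tk: "\<And>k. k \<in> {..N} \<Longrightarrow> ?t k = (if k = 0 then - gc E p N else 0) + (if k = N then gc E p N else 0)"
    proof -
      fix k assume k: "k \<in> {..N}"
      consider "k = 0" | "k = N" | "k \<noteq> 0" "k \<noteq> N" "even k" | "k \<noteq> 0" "k \<noteq> N" "odd k" by blast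
      then show "?t k = (if k = 0 then - gc E p N else 0) + (if k = N then gc E p N else 0)"
      proof cases
        case 1 then show ?thesis using 2 by (auto simp: hc_def)
      next
        case 2
        have "N \<noteq> 0" using \<open>odd N\<close> by (cases N) auto
        then show ?thesis using 2 \<open>odd N\<close> by (auto simp: hc_def gc_def)
      next
        case 3 then show ?thesis by (auto simp: hc_def)
      next
        case 4
        have "even (N - k)" "N - k \<noteq> 0" using 4 k \<open>odd N\<close> by auto
        then show ?thesis using 4 by (auto simp: hc_def)
      qed
    qed
    have "(\<Sum>k\<le>N. ?t k) = (\<Sum>k\<le>N. (if k = 0 then - gc E p N else 0) + (if k = N then gc E p N else 0))"
      by (rule sum.cong[OF refl tk])
    also have "\<dots> = 0" by (simp add: sum.distrib)
    finally show ?thesis using 2 by (simp add: hc_def)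
  next
    case 3
    define M where "M = N div 2 - 1"
    have tk: "\<And>k. k \<in> {..N} \<Longrightarrow> ?t k = (if k = 0 then - gc E p N else 0)
        + p * c ^ M * (if odd k then of_nat (N choose k) * E k * E (N - k) else 0)"
    proof -
      fix k assume k: "k \<in> {..N}"
      consider "k = 0" | "k \<noteq> 0" "even k" | "odd k" by blast
      then show "?t k = (if k = 0 then - gc E p N else 0)
        + p * c ^ M * (if odd k then of_nat (N choose k) * E k * E (N - k) else 0)"
      proof cases
        case 1 then show ?thesis using 3 by (auto simp: hc_def)
      next
        case 2 then show ?thesis by (auto simp: hc_def)
      next
        case 4: 3
        have o: "odd (N - k)" "k \<noteq> N" "k \<noteq> 0" using 4 k 3 by auto
        have ex: "(k - 1) div 2 + (N - k - 1) div 2 = M" unfolding M_def using X1[of k N] 4 k 3 o by simp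
        have "?t k = of_nat (N choose k) * (c ^ ((k - 1) div 2) * E k) * p * (c ^ ((N - k - 1) div 2) * E (N - k))"
          using o 4 by (simp add: hc_def c_def)
        also have "\<dots> = p * (c ^ ((k - 1) div 2) * c ^ ((N - k - 1) div 2)) * (of_nat (N choose k) * E k * E (N - k))"
          by (simp add: algebra_simps)
        also have "c ^ ((k - 1) div 2) * c ^ ((N - k - 1) div 2) = c ^ M" by (simp only: power_add[symmetric] ex)
        finally show ?thesis using o 4 by simp
      qed
    qed
    have "(\<Sum>k\<le>N. ?t k) = (\<Sum>k\<le>N. (if k = 0 then - gc E p N else 0)
        + p * c ^ M * (if odd k then of_nat (N choose k) * E k * E (N - k) else 0))"
      by (rule sum.cong[OF refl tk])
    also have "\<dots> = - gc E p N + p * c ^ M * E (Suc N)"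
      using Rodd[of N] 3 by (simp add: sum.distrib sum_distrib_left[symmetric])
    also have "\<dots> = hc E p (Suc N)"
    proof -
      have e1: "(N - 2) div 2 = M" and e2: "N div 2 = Suc M" unfolding M_def using 3 by presburger+
      have "gc E p N = d * c ^ M * E (Suc N)" using 3 e1 by (simp add: gc_def c_def d_def)
      moreover have "hc E p (Suc N) = c ^ Suc M * E (Suc N)"
        using 3 e2 by (simp add: hc_def c_def)
      ultimately show ?thesis by (simp add: c_def d_def field_simps)
    qed
    finally show ?thesis .
  qed
qed


lemma Q_rev:
  fixes E :: "nat \<Rightarrow> real"
  assumes "odd N"
  shows "(\<Sum>k\<le>N. if odd k \<and> k < N then of_nat (N choose k) * E k * E (N + 1 - k) else (0::real))
       = (\<Sum>k\<le>N. if even k \<and> 2 \<le> k then of_nat (N choose k) * E (k + 1) * E (N - k) else 0)"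
proof -
  have "(\<Sum>k\<le>N. if odd k \<and> k < N then of_nat (N choose k) * E k * E (N + 1 - k) else (0::real))
      = (\<Sum>k\<le>N. if odd (N - k) \<and> N - k < N then of_nat (N choose (N - k)) * E (N - k) * E (N + 1 - (N - k)) else (0::real))"
    by (rule sum_rev_atMost)
  also have "\<dots> = (\<Sum>k\<le>N. if even k \<and> 2 \<le> k then of_nat (N choose k) * E (k + 1) * E (N - k) else 0)"
  proof (rule sum.cong[OF refl])
    fix k assume k: "k \<in> {..N}"
    have a: "(odd (N - k) \<and> N - k < N) = (even k \<and> 2 \<le> k)"
    proof
      assume "odd (N - k) \<and> N - k < N"
      then have "even k" "k \<noteq> 0" using k assms by (auto simp: even_diff_nat)
      then show "even k \<and> 2 \<le> k" by presburger
    next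
      assume "even k \<and> 2 \<le> k"
      then show "odd (N - k) \<and> N - k < N" using k assms by auto
    qed
    have b: "N choose (N - k) = N choose k" using k by (simp add: binomial_symmetric[symmetric])
    have c: "N + 1 - (N - k) = k + 1" using k by simp
    show "(if odd (N - k) \<and> N - k < N then of_nat (N choose (N - k)) * E (N - k) * E (N + 1 - (N - k)) else (0::real))
      = (if even k \<and> 2 \<le> k then of_nat (N choose k) * E (k + 1) * E (N - k) else 0)"
      unfolding a b c by simp
  qed
  finally show ?thesis .
qed

lemma E_N2:
  fixes E :: "nat \<Rightarrow> real"
  assumes E1: "E 1 = 1"
    and Rodd: "\<And>N. N \<ge> 1 \<Longrightarrow> E (Suc N) = (\<Sum>k\<le>N. if odd k then of_nat (N choose k) * E k * E (N - k) else 0)"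
    and N: "odd N"
  shows "E (N + 2) = 2 * (E N + (\<Sum>k\<le>N. if even k \<and> 2 \<le> k then of_nat (N choose k) * E (k + 1) * E (N - k) else 0))"
proof -
  define Qe where "Qe = (\<Sum>k\<le>N. if even k \<and> 2 \<le> k then of_nat (N choose k) * E (k + 1) * E (N - k) else 0)"
  define Qo where "Qo = (\<Sum>k\<le>N. if odd k \<and> k < N then of_nat (N choose k) * E k * E (N + 1 - k) else (0::real))"
  have QQ: "Qo = Qe" unfolding Qo_def Qe_def by (rule Q_rev[OF N])
  have E1': "E (Suc 0) = 1" using E1 by simp
  define F where "F = (\<lambda>k. if odd k then of_nat (Suc N choose k) * E k * E (Suc N - k) else (0::real))"
  have "E (N + 2) = E (Suc (Suc N))" by simp
  also have "\<dots> = (\<Sum>k\<le>Suc N. F k)" unfolding F_def by (rule Rodd) simp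
  also have "\<dots> = F 0 + (\<Sum>k\<le>N. F (Suc k))" by (rule sum.atMost_Suc_shift)
  also have "\<dots> = (\<Sum>k\<le>N. F (Suc k))" by (simp add: F_def)
  also have "\<dots> = (\<Sum>k\<le>N. (if even k then of_nat (N choose k) * E (k + 1) * E (N - k) else 0)
      + (if even k then of_nat (N choose Suc k) * E (Suc k) * E (N - k) else 0))"
    unfolding F_def by (intro sum.cong refl) (auto simp: algebra_simps)
  also have "\<dots> = (\<Sum>k\<le>N. (if even k then of_nat (N choose k) * E (k + 1) * E (N - k) else 0))
      + (\<Sum>k\<le>N. (if even k then of_nat (N choose Suc k) * E (Suc k) * E (N - k) else 0))"
    by (rule sum.distrib)
  also have "(\<Sum>k\<le>N. (if even k then of_nat (N choose k) * E (k + 1) * E (N - k) else 0)) = E N + Qe"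
  proof -
    have "(\<Sum>k\<le>N. (if even k then of_nat (N choose k) * E (k + 1) * E (N - k) else 0))
       = (\<Sum>k\<le>N. (if k = 0 then E N else 0) + (if even k \<and> 2 \<le> k then of_nat (N choose k) * E (k + 1) * E (N - k) else 0))"
      by (intro sum.cong refl) (auto simp: E1')
    also have "\<dots> = E N + Qe" unfolding Qe_def by (simp add: sum.distrib)
    finally show ?thesis .
  qed
  also have "(\<Sum>k\<le>N. (if even k then of_nat (N choose Suc k) * E (Suc k) * E (N - k) else 0)) = E N + Qo"
  proof -
    define G where "G = (\<lambda>j. if odd j \<and> j \<le> N then of_nat (N choose j) * E j * E (N + 1 - j) else (0::real))"
    have "(\<Sum>k\<le>N. (if even k then of_nat (N choose Suc k) * E (Suc k) * E (N - k) else 0)) = (\<Sum>k\<le>N. G (Suc k))"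
      unfolding G_def by (intro sum.cong refl) auto
    also have "\<dots> = (\<Sum>j\<le>Suc N. G j)"
    proof -
      have "(\<Sum>j\<le>Suc N. G j) = G 0 + (\<Sum>k\<le>N. G (Suc k))" by (rule sum.atMost_Suc_shift)
      moreover have "G 0 = 0" by (simp add: G_def)
      ultimately show ?thesis by simp
    qed
    also have "\<dots> = (\<Sum>j\<le>N. G j)" using N by (simp add: G_def)
    also have "\<dots> = (\<Sum>j\<le>N. (if j = N then E N else 0) + (if odd j \<and> j < N then of_nat (N choose j) * E j * E (N + 1 - j) else 0))"
      unfolding G_def using N by (intro sum.cong refl) (auto simp: E1')
    also have "\<dots> = E N + Qo" unfolding Qo_def by (simp add: sum.distrib)
    finally show ?thesis .
  qed
  finally show ?thesis using QQ Qe_def by simp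
qed


lemma I1:
  fixes E :: "nat \<Rightarrow> real"
  assumes E1: "E 1 = 1"
    and Rodd: "\<And>N. N \<ge> 1 \<Longrightarrow> E (Suc N) = (\<Sum>k\<le>N. if odd k then of_nat (N choose k) * E k * E (N - k) else 0)"
  shows "(\<Sum>k\<le>N. of_nat (N choose k) * gc E p k * (if k = N then 1 else if even k then p else -1)
      * (if even k then hc E p (N - k) else gc E p (N - k))) = gc E p (Suc N)"
proof -
  define c where "c = (p-1)/2"
  define d where "d = (p+1)/2"
  have E1': "E (Suc 0) = 1" using E1 by simp
  let ?t = "\<lambda>k. of_nat (N choose k) * gc E p k * (if k = N then 1 else if even k then p else -1)
      * (if even k then hc E p (N - k) else gc E p (N - k))"
  have cs: "N = 0 \<or> N = 1 \<or> (even N \<and> N \<ge> 2) \<or> (odd N \<and> N \<ge> 3)" by presburger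
  consider "N = 0" | "N = 1" | "even N" "N \<ge> 2" | "odd N" "N \<ge> 3" using cs by blast
  then show ?thesis
  proof cases
    case 1
    then show ?thesis using E1' by (simp add: gc_def hc_def)
  next
    case 2
    have E3: "E 3 = 2" using Rodd[of 2] E1' by (simp add: numeral_2_eq_2 numeral_3_eq_3 atMost_Suc)
    have "(\<Sum>k\<le>N. ?t k) = ?t 0 + ?t 1" using 2 by (simp add: atMost_Suc)
    also have "\<dots> = p + 1" using 2 E1' by (simp add: gc_def hc_def)
    also have "\<dots> = gc E p (Suc N)" using 2 E3 by (simp add: gc_def numeral_3_eq_3)
    finally show ?thesis .
  next
    case 3
    define M where "M = N div 2 - 1"
    have tk: "\<And>k. k \<in> {..N} \<Longrightarrow> ?t k = (if k = N then gc E p N else 0)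
        - c ^ M * (if odd k then of_nat (N choose k) * E k * E (N - k) else 0)"
    proof -
      fix k assume k: "k \<in> {..N}"
      consider "k = N" | "k \<noteq> N" "even k" | "odd k" by blast
      then show "?t k = (if k = N then gc E p N else 0)
        - c ^ M * (if odd k then of_nat (N choose k) * E k * E (N - k) else 0)"
      proof cases
        case 1 then show ?thesis using 3 by (auto simp: hc_def)
      next
        case 2
        have "even (N - k)" "N - k \<noteq> 0" using 2 3 k by (auto simp: even_diff_nat)
        then show ?thesis using 2 by (auto simp: hc_def)
      next
        case 4: 3
        have o: "odd (N - k)" "k \<noteq> N" using 4 k 3 by (auto simp: even_diff_nat)
        have ex: "(k - 1) div 2 + (N - k - 1) div 2 = M" unfolding M_def using X1[of k N] 4 k 3 o by simp
        have "?t k = - (of_nat (N choose k) * (c ^ ((k - 1) div 2) * E k) * (c ^ ((N - k - 1) div 2) * E (N - k)))"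
          using o 4 by (simp add: gc_def c_def)
        also have "\<dots> = - ((c ^ ((k - 1) div 2) * c ^ ((N - k - 1) div 2)) * (of_nat (N choose k) * E k * E (N - k)))"
          by (simp add: algebra_simps)
        also have "c ^ ((k - 1) div 2) * c ^ ((N - k - 1) div 2) = c ^ M" by (simp only: power_add[symmetric] ex)
        finally show ?thesis using o 4 by simp
      qed
    qed
    have "(\<Sum>k\<le>N. ?t k) = (\<Sum>k\<le>N. (if k = N then gc E p N else 0)
        - c ^ M * (if odd k then of_nat (N choose k) * E k * E (N - k) else 0))"
      by (rule sum.cong[OF refl tk])
    also have "\<dots> = gc E p N - c ^ M * E (Suc N)"
      using Rodd[of N] 3 by (simp add: sum_subtractf sum_distrib_left[symmetric])
    also have "\<dots> = gc E p (Suc N)"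
    proof -
      have e1: "(N - 2) div 2 = M" and e2: "N div 2 = Suc M" unfolding M_def using 3 by presburger+
      have "gc E p N = d * c ^ M * E (Suc N)" using 3 e1 by (simp add: gc_def c_def d_def)
      moreover have "gc E p (Suc N) = c ^ Suc M * E (Suc N)"
        using 3 e2 by (simp add: gc_def c_def)
      ultimately show ?thesis by (simp add: c_def d_def field_simps)
    qed
    finally show ?thesis .
  next
    case 4
    define m where "m = (N - 1) div 2"
    have m1: "m \<ge> 1" unfolding m_def using 4 by presburger
    define Qe where "Qe = (\<Sum>k\<le>N. if even k \<and> 2 \<le> k then of_nat (N choose k) * E (k + 1) * E (N - k) else 0)"
    define Qo where "Qo = (\<Sum>k\<le>N. if odd k \<and> k < N then of_nat (N choose k) * E k * E (N + 1 - k) else (0::real))"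
    have QQ: "Qo = Qe" unfolding Qo_def Qe_def by (rule Q_rev) (use 4 in simp)
    have tk: "\<And>k. k \<in> {..N} \<Longrightarrow> ?t k = (if k = 0 then p * c ^ m * E N else 0) + (if k = N then c ^ m * E N else 0)
        + p * d * c ^ (m - 1) * (if even k \<and> 2 \<le> k then of_nat (N choose k) * E (k + 1) * E (N - k) else 0)
        - d * c ^ (m - 1) * (if odd k \<and> k < N then of_nat (N choose k) * E k * E (N + 1 - k) else 0)"
    proof -
      fix k assume k: "k \<in> {..N}"
      have NN: "N \<noteq> 0" using 4 by simp
      have kN: "k \<le> N" using k by simp
      have "k = 0 \<or> k = N \<or> (even k \<and> 2 \<le> k) \<or> (odd k \<and> k < N)" using kN by presburger
      then consider "k = 0" | "k = N" | "even k" "2 \<le> k" | "odd k" "k < N" by blast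
      then show "?t k = (if k = 0 then p * c ^ m * E N else 0) + (if k = N then c ^ m * E N else 0)
        + p * d * c ^ (m - 1) * (if even k \<and> 2 \<le> k then of_nat (N choose k) * E (k + 1) * E (N - k) else 0)
        - d * c ^ (m - 1) * (if odd k \<and> k < N then of_nat (N choose k) * E k * E (N + 1 - k) else 0)"
      proof cases
        case 1 then show ?thesis using 4 NN by (simp add: gc_def hc_def c_def m_def)
      next
        case 2 then show ?thesis using 4 NN by (simp add: gc_def hc_def c_def m_def)
      next
        case 3
        have kn: "k \<noteq> N" using 3 4 by auto
        have o: "odd (N - k)" "k \<noteq> N" "k \<noteq> 0" "k < N" using 3 k 4 kn by (auto simp: even_diff_nat)
        have ex: "(k - 2) div 2 + (N - k - 1) div 2 = m - 1" unfolding m_def using X2[of N k] 3 o 4 by simp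
        have "?t k = of_nat (N choose k) * (d * c ^ ((k - 2) div 2) * E (k + 1)) * p * (c ^ ((N - k - 1) div 2) * E (N - k))"
          using o 3 by (simp add: gc_def hc_def c_def d_def)
        also have "\<dots> = p * d * (c ^ ((k - 2) div 2) * c ^ ((N - k - 1) div 2)) * (of_nat (N choose k) * E (k + 1) * E (N - k))"
          by (simp add: algebra_simps)
        also have "c ^ ((k - 2) div 2) * c ^ ((N - k - 1) div 2) = c ^ (m - 1)" by (simp only: power_add[symmetric] ex)
        finally show ?thesis using o 3 by simp
      next
        case 5: 4
        have o: "even (N - k)" "N - k \<noteq> 0" "k \<noteq> N" "k \<noteq> 0" using 5 k 4 by (auto simp: even_diff_nat)
        have ex: "(k - 1) div 2 + (N - k - 2) div 2 = m - 1" unfolding m_def using X3[of N k] 5 4 by simp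
        have s: "E (Suc (N - k)) = E (Suc N - k)" using k by (simp add: Suc_diff_le)
        have "?t k = - (of_nat (N choose k) * (c ^ ((k - 1) div 2) * E k) * (d * c ^ ((N - k - 2) div 2) * E (N + 1 - k)))"
          using o 5 by (simp add: gc_def c_def d_def s)
        also have "\<dots> = - (d * (c ^ ((k - 1) div 2) * c ^ ((N - k - 2) div 2)) * (of_nat (N choose k) * E k * E (N + 1 - k)))"
          by (simp add: algebra_simps)
        also have "c ^ ((k - 1) div 2) * c ^ ((N - k - 2) div 2) = c ^ (m - 1)" by (simp only: power_add[symmetric] ex)
        finally show ?thesis using o 5 by simp
      qed
    qed
    have "(\<Sum>k\<le>N. ?t k) = (\<Sum>k\<le>N. (if k = 0 then p * c ^ m * E N else 0) + (if k = N then c ^ m * E N else 0)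
        + p * d * c ^ (m - 1) * (if even k \<and> 2 \<le> k then of_nat (N choose k) * E (k + 1) * E (N - k) else 0)
        - d * c ^ (m - 1) * (if odd k \<and> k < N then of_nat (N choose k) * E k * E (N + 1 - k) else 0))"
      by (rule sum.cong[OF refl tk])
    also have "\<dots> = p * c ^ m * E N + c ^ m * E N + p * d * c ^ (m - 1) * Qe - d * c ^ (m - 1) * Qo"
      unfolding Qe_def Qo_def by (simp add: sum.distrib sum_subtractf sum_distrib_left[symmetric])
    also have "\<dots> = d * c ^ m * (2 * (E N + Qe))"
    proof -
      have cm: "c ^ m = c * c ^ (m - 1)" using m1 by (simp add: power_eq_if)
      show ?thesis unfolding QQ cm by (simp add: c_def d_def field_simps)
    qed
    also have "2 * (E N + Qe) = E (N + 2)" unfolding Qe_def by (rule E_N2[symmetric, OF E1 Rodd]) (use 4 in auto)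
    also have "d * c ^ m * E (N + 2) = gc E p (Suc N)"
    proof -
      have "(Suc N - 2) div 2 = m" unfolding m_def using 4 by presburger
      then show ?thesis using 4 by (simp add: gc_def c_def d_def)
    qed
    finally show ?thesis .
  qed
qed




lemma fA_per: "fA p (Suc (Suc j)) = fA p j" by (auto simp: fA_def fun_eq_iff)

lemma Gn_fA_mod: "Gn (fA p) s n = (if even s then Gn (fA p) 0 n else Gn (fA p) 1 n)"
  using Gn_period[of "fA p" s n, OF fA_per] by (simp add: mod2_eq_if)

lemma gh: "Gn (fA p) 0 n = gc EE p n \<and> Gn (fA p) 1 n = hc EE p n"
proof (induction n rule: less_induct)
  case (less n)
  show ?case
  proof (cases n)
    case 0
    then show ?thesis by (simp add: Gn_0 gc_def hc_def)
  next
    case (Suc N)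
    have IHg: "\<And>k. k \<le> N \<Longrightarrow> Gn (fA p) 0 k = gc EE p k" using less Suc by auto
    have IHh: "\<And>k. k \<le> N \<Longrightarrow> Gn (fA p) 1 k = hc EE p k" using less Suc by auto
    have Rodd: "\<And>N. N \<ge> 1 \<Longrightarrow> EE (Suc N) = (\<Sum>k\<le>N. if odd k then of_nat (N choose k) * EE k * EE (N - k) else 0)"
      by (rule R_odd)
    have "Gn (fA p) 0 (Suc N) = (\<Sum>k\<le>N. of_nat (N choose k) * Rt (fA p) 0 N k)" by (rule Gn_rec)
    also have "\<dots> = (\<Sum>k\<le>N. of_nat (N choose k) * gc EE p k * (if k = N then 1 else if even k then p else -1)
      * (if even k then hc EE p (N - k) else gc EE p (N - k)))"
    proof (rule sum.cong[OF refl])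
      fix k assume k: "k \<in> {..N}"
      then have k1: "k \<le> N" "N - k \<le> N" by auto
      show "of_nat (N choose k) * Rt (fA p) 0 N k = of_nat (N choose k) * gc EE p k * (if k = N then 1 else if even k then p else -1)
      * (if even k then hc EE p (N - k) else gc EE p (N - k))"
        unfolding Rt_def using IHg[OF k1(1)] IHg[OF k1(2)] IHh[OF k1(2)]
        by (subst (2) Gn_fA_mod) (simp add: fA_def)
    qed
    also have "\<dots> = gc EE p (Suc N)" by (rule I1[OF E1 Rodd])
    finally have G: "Gn (fA p) 0 (Suc N) = gc EE p (Suc N)" .
    have "Gn (fA p) 1 (Suc N) = (\<Sum>k\<le>N. of_nat (N choose k) * Rt (fA p) 1 N k)" by (rule Gn_rec)
    also have "\<dots> = (\<Sum>k\<le>N. of_nat (N choose k) * hc EE p k * (if k = N then 1 else if odd k then p else -1)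
      * (if even k then gc EE p (N - k) else hc EE p (N - k)))"
    proof (rule sum.cong[OF refl])
      fix k assume k: "k \<in> {..N}"
      then have k1: "k \<le> N" "N - k \<le> N" by auto
      show "of_nat (N choose k) * Rt (fA p) 1 N k = of_nat (N choose k) * hc EE p k * (if k = N then 1 else if odd k then p else -1)
      * (if even k then gc EE p (N - k) else hc EE p (N - k))"
        unfolding Rt_def using IHh[OF k1(1)] IHg[OF k1(2)] IHh[OF k1(2)]
        by (subst (2) Gn_fA_mod) (simp add: fA_def)
    qed
    also have "\<dots> = hc EE p (Suc N)" by (rule I2[OF E1 Rodd])
    finally show ?thesis using G Suc by simp
  qed
qed

theorem corollary3p5:
  fixes n :: nat and p :: real
  shows "A (2*n+1) p (-1) = ((p - 1) / 2) ^ n * real (Euler_num (2*n+1))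
       \<and> A (2*n+2) p (-1) = (p + 1) / 2 * ((p - 1) / 2) ^ n * real (Euler_num (2*n+3))"
proof
  show "A (2*n+1) p (-1) = ((p - 1) / 2) ^ n * real (Euler_num (2*n+1))"
    using gh[of p "2*n+1"] by (simp add: A_Gn gc_def)
  have e: "Euler_num (2*n+3) = Euler_num (Suc (Suc (Suc (2*n))))" by (simp add: numeral_3_eq_3)
  show "A (2*n+2) p (-1) = (p + 1) / 2 * ((p - 1) / 2) ^ n * real (Euler_num (2*n+3))"
    using gh[of p "2*n+2"] unfolding e by (simp add: A_Gn gc_def)
qed


end
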